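(* Fix $\epsilon_2>0$ and $(u_\pm,v_\pm)$ with $v_\pm>0$ and $u_->u_++2\epsilon_2$, and for small $\epsilon_1>0$ let $(u_*^{\epsilon_2},v_*^{\epsilon_2})$ and $\sigma_1^{\epsilon_2},\sigma_2^{\epsilon_2}$ be the intermediate state and shock speeds of the two-shock Riemann solution. Then $$\lim_{\epsilon_1\to0}u_*^{\epsilon_2}=\frac{u_-+u_+}{2}+\epsilon_2,\qquad \lim_{\epsilon_1\to0}\sigma_1^{\epsilon_2}=\lim_{\epsilon_1\to0}\sigma_2^{\epsilon_2}=\frac{u_-+u_+}{2}.$$
   Context: Perturbed Brio system: $u_t+(\tfrac12u^2+\tfrac12\epsilon_1v^2)_x=0$, $v_t+(uv-\epsilon_2v)_x=0$, $\epsilon_1,\epsilon_2>0$, $v>0$. The two-shock intermediate state $(u_*,v_* )$ satisfies $v_*>\max(v_-,v_+)$, $u_+<u_*<u_-$, $$u_*=u_-+(v_*-v_-)\frac{\epsilon_2-\sqrt{\epsilon_2^2+4\epsilon_1(v_*+v_-)^2}}{v_*+v_-},\qquad u_+=u_*+(v_+-v_* )\frac{\epsilon_2+\sqrt{\epsilon_2^2+4\epsilon_1(v_*+v_+)^2}}{v_*+v_+},$$ with shock speeds $\sigma_1=u_-+\frac{v_*(u_*-u_-)}{v_*-v_-}-\epsilon_2$, $\sigma_2=u_++\frac{v_*(u_+-u_* )}{v_+-v_*}-\epsilon_2$. *)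

theory Defs
  imports Complex_Main
begin

definition two_shock_state ::
  "real \<Rightarrow> real \<Rightarrow> real \<Rightarrow> real \<Rightarrow> real \<Rightarrow> real \<Rightarrow> real \<Rightarrow> real \<Rightarrow> bool" where
  "two_shock_state e1 e2 um vm up vp us vs \<longleftrightarrow>
     vs > max vm vp \<and> up < us \<and> us < um \<and>
     us = um + (vs - vm) * (e2 - sqrt (e2\<^sup>2 + 4 * e1 * (vs + vm)\<^sup>2)) / (vs + vm) \<and>
     up = us + (vp - vs) * (e2 + sqrt (e2\<^sup>2 + 4 * e1 * (vs + vp)\<^sup>2)) / (vs + vp)"

definition shock_speed1 :: "real \<Rightarrow> real \<Rightarrow> real \<Rightarrow> real \<Rightarrow> real \<Rightarrow> real" where
  "shock_speed1 e2 um vm us vs = um + vs * (us - um) / (vs - vm) - e2"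

definition shock_speed2 :: "real \<Rightarrow> real \<Rightarrow> real \<Rightarrow> real \<Rightarrow> real \<Rightarrow> real" where
  "shock_speed2 e2 up vp us vs = up + vs * (up - us) / (vp - vs) - e2"

end

theory Submission
  imports Defs
begin

lemma sqrt_diff_bound:
  fixes a b m :: real
  assumes "a \<ge> 0" "b \<ge> 0" "m > 0" "sqrt a + sqrt b \<ge> m"
  shows "\<bar>sqrt a - sqrt b\<bar> \<le> \<bar>a - b\<bar> / m"
proof -
  have "\<bar>sqrt a - sqrt b\<bar> * (sqrt a + sqrt b) = \<bar>a - b\<bar>"
  proof -
    have "(sqrt a - sqrt b) * (sqrt a + sqrt b) = a - b"
      using assms by (simp add: algebra_simps)
    moreover have "sqrt a + sqrt b \<ge> 0" using assms by simp
    ultimately show ?thesis by (metis abs_mult abs_of_nonneg)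
  qed
  moreover have "\<bar>sqrt a - sqrt b\<bar> * m \<le> \<bar>sqrt a - sqrt b\<bar> * (sqrt a + sqrt b)"
    using assms by (intro mult_left_mono) auto
  ultimately show ?thesis using assms by (simp add: pos_le_divide_eq)
qed

lemma tri: fixes a b c :: real shows "\<bar>a - b + c\<bar> \<le> \<bar>a\<bar> + \<bar>b\<bar> + \<bar>c\<bar>"
  by linarith
lemma ab: fixes r S :: real shows "r < 1 \<Longrightarrow> 0 \<le> S \<Longrightarrow> \<bar>(r-1)*S\<bar> = (1-r)*S"
  by (simp add: abs_mult)

lemma pw:
  fixes e e2 um vm up vp u x :: real
  defines "S1 \<equiv> sqrt (e2\<^sup>2 + 4*e*(x+vm)\<^sup>2)" and "S2 \<equiv> sqrt (e2\<^sup>2 + 4*e*(x+vp)\<^sup>2)"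
    and "r1 \<equiv> (1 - vm/x)/(1 + vm/x)" and "r2 \<equiv> (1 - vp/x)/(1 + vp/x)"
    and "D \<equiv> um - up" and "c \<equiv> (um - up - 2*e2)/2" and "B \<equiv> e2 + (um - up) + 4*(vm+vp)"
  assumes e2: "e2 > 0" and vm: "vm > 0" and vp: "vp > 0" and D: "um > up + 2*e2"
    and e: "0 < e" "e < 1" and st: "two_shock_state e e2 um vm up vp u x"
  shows "u = um - r1*(S1-e2)" "u - up = r2*(S2+e2)"
    "vm/x \<le> 4*vm*sqrt e/c" "vp/x \<le> 4*vp*sqrt e/c" "0 \<le> vm/x" "0 \<le> vp/x"
    "0 \<le> e*x" "e*x \<le> sqrt e*(D/2 + sqrt e*vp)"
    "\<bar>r2*(S2+e2) - r1*(S1-e2) - 2*e2\<bar> \<le> (1-r2)*(B+e2) + (1-r1)*B + 2*\<bar>vp-vm\<bar>*(2*(e*x) + e*(vm+vp))/e2"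
proof -
  define s where "s = sqrt e"
  have s: "s > 0" "s < 1" "s*s = e" using e by (auto simp: s_def)
  have xm: "x > vm" and xp: "x > vp" and
    ueq: "u = um + (x - vm) * (e2 - S1) / (x + vm)" and
    upeq: "up = u + (vp - x) * (e2 + S2) / (x + vp)"
    using st unfolding two_shock_state_def S1_def S2_def by auto
  have x0: "x > 0" using xm vm by simp
  have r1e: "r1 = (x-vm)/(x+vm)" proof -
    have "1 - vm/x = (x-vm)/x" "1 + vm/x = (x+vm)/x" using x0 by (simp_all add: field_simps)
    thus ?thesis unfolding r1_def using x0 by simp
  qed
  have r2e: "r2 = (x-vp)/(x+vp)" proof -
    have "1 - vp/x = (x-vp)/x" "1 + vp/x = (x+vp)/x" using x0 by (simp_all add: field_simps)
    thus ?thesis unfolding r2_def using x0 by simp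
  qed
  have r1b: "0 < r1" "r1 < 1" using xm vm unfolding r1e by (auto simp: field_simps)
  have r2b: "0 < r2" "r2 < 1" using xp vp unfolding r2e by (auto simp: field_simps)
  show t1: "u = um - r1*(S1-e2)" proof -
    have a: "(x - vm) * (e2 - S1) / (x + vm) = (x-vm)/(x+vm) * (e2 - S1)" by simp
    have "\<forall>a. um + a*(e2-S1) = um - a*(S1-e2)" by (simp add: algebra_simps)
    hence "(x - vm) * (e2 - S1) / (x + vm) = - ((x-vm)/(x+vm)*(S1-e2))" unfolding a by (metis add_diff_cancel_left' diff_conv_add_uminus)
    thus ?thesis unfolding ueq r1e by simp
  qed
  show t2: "u - up = r2*(S2+e2)" proof -
    have a: "(vp - x) * (e2 + S2) / (x + vp) = (x-vp)/(x+vp) * (- (S2+e2))" by (simp add: algebra_simps)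
    have "(vp - x) * (e2 + S2) / (x + vp) = - ((x-vp)/(x+vp)*(S2+e2))" using a by (metis mult_minus_right)
    thus ?thesis unfolding upeq r2e by simp
  qed
  have S1lo: "S1 \<ge> e2"
  proof -
    have "e2\<^sup>2 \<le> e2\<^sup>2 + 4*e*(x+vm)\<^sup>2" using e by simp
    hence "sqrt (e2\<^sup>2) \<le> S1" unfolding S1_def by (rule real_sqrt_le_mono)
    thus ?thesis using e2 by simp
  qed
  have S1hi: "S1 \<le> e2 + 2*s*(x+vm)"
  proof -
    have "e2\<^sup>2 + 4*e*(x+vm)\<^sup>2 \<le> (e2 + 2*s*(x+vm))\<^sup>2"
      using s e2 x0 vm by (simp add: power2_eq_square algebra_simps flip: s(3))
    hence "S1 \<le> sqrt ((e2 + 2*s*(x+vm))\<^sup>2)" unfolding S1_def by (rule real_sqrt_le_mono)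
    thus ?thesis using s e2 x0 vm by simp
  qed
  have S2hi: "S2 \<le> e2 + 2*s*(x+vp)"
  proof -
    have "e2\<^sup>2 + 4*e*(x+vp)\<^sup>2 \<le> (e2 + 2*s*(x+vp))\<^sup>2"
      using s e2 x0 vp by (simp add: power2_eq_square algebra_simps flip: s(3))
    hence "S2 \<le> sqrt ((e2 + 2*s*(x+vp))\<^sup>2)" unfolding S2_def by (rule real_sqrt_le_mono)
    thus ?thesis using s e2 x0 vp by simp
  qed
  have S2lo: "S2 \<ge> 2*s*(x+vp)"
  proof -
    have "(2*s*(x+vp))\<^sup>2 \<le> e2\<^sup>2 + 4*e*(x+vp)\<^sup>2"
      using s by (simp add: power2_eq_square algebra_simps flip: s(3))
    hence "sqrt ((2*s*(x+vp))\<^sup>2) \<le> S2" unfolding S2_def by (rule real_sqrt_le_mono)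
    thus ?thesis using s x0 vp by simp
  qed
  have S2lo': "S2 \<ge> e2"
  proof -
    have "e2\<^sup>2 \<le> e2\<^sup>2 + 4*e*(x+vp)\<^sup>2" using e by simp
    hence "sqrt (e2\<^sup>2) \<le> S2" unfolding S2_def by (rule real_sqrt_le_mono)
    thus ?thesis using e2 by simp
  qed
  have Deq: "D = r1*(S1-e2) + r2*(S2+e2)" unfolding D_def using t1 t2 by simp
  have t1nn: "r1*(S1-e2) \<ge> 0" using r1b S1lo by simp
  have t1le: "r1*(S1-e2) \<le> S1 - e2" using r1b S1lo by (intro mult_left_le_one_le) auto
  have t2le: "r2*(S2+e2) \<le> S2 + e2" using r2b S2lo' e2 by (intro mult_left_le_one_le) auto
  have "r2*(S2+e2) \<ge> r2*S2" using r2b e2 by (simp add: algebra_simps)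
  moreover have "r2*S2 \<ge> r2*(2*s*(x+vp))" using r2b S2lo by (simp add: mult_left_mono)
  moreover have "r2*(2*s*(x+vp)) = 2*s*(x-vp)" unfolding r2e using xp vp by (simp add: field_simps)
  ultimately have P4: "s*(x-vp) \<le> D/2" using Deq t1nn by linarith
  have P3: "c \<le> s*(2*x+vm+vp)"
    using Deq t1le t2le S1hi S2hi unfolding c_def D_def by (simp add: algebra_simps)
  have c0: "c > 0" unfolding c_def using D by simp
  have "s*(2*x+vm+vp) \<le> s*(4*x)" using s xm xp by (intro mult_left_mono) auto
  hence xw: "x \<ge> c/(4*s)" using P3 s by (simp add: field_simps)
  have cx: "c/(4*s) > 0" using c0 s by simp
  show "vm/x \<le> 4*vm*sqrt e/c"
  proof -
    have "vm/x \<le> vm/(c/(4*s))" using xw vm mult_pos_pos[OF x0 cx] by (intro divide_left_mono) auto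
    thus ?thesis using c0 s by (simp add: s_def field_simps)
  qed
  show "vp/x \<le> 4*vp*sqrt e/c"
  proof -
    have "vp/x \<le> vp/(c/(4*s))" using xw vp mult_pos_pos[OF x0 cx] by (intro divide_left_mono) auto
    thus ?thesis using c0 s by (simp add: s_def field_simps)
  qed
  show "0 \<le> vm/x" "0 \<le> vp/x" "0 \<le> e*x" using vm vp x0 e by auto
  show "e*x \<le> sqrt e*(D/2 + sqrt e*vp)"
  proof -
    have "s*(s*x) \<le> s*(D/2 + s*vp)" using P4 s by (intro mult_left_mono) (auto simp: algebra_simps)
    thus ?thesis using s by (simp add: s_def[symmetric] algebra_simps flip: s(3))
  qed
  have svp: "s*vp \<le> vp" "s*vm \<le> vm" using s vp vm by (simp_all add: mult_left_le_one_le)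
  have e1: "2*s*(x+vp) = 2*(s*(x-vp)) + 4*(s*vp)" by (simp add: algebra_simps)
  have e2': "2*s*(x+vm) = 2*(s*(x-vp)) + 2*(s*vp) + 2*(s*vm)" by (simp add: algebra_simps)
  define A where "A = s*(x-vp)"
  define P where "P = s*vp"
  define Q where "Q = s*vm"
  have hA: "2*A \<le> um - up" using P4 unfolding D_def A_def by simp
  have hP: "P \<le> vp" "Q \<le> vm" using svp unfolding P_def Q_def by simp_all
  have S2B: "S2 \<le> B"
  proof -
    have "S2 \<le> e2 + (2*A + 4*P)" using S2hi e1 unfolding A_def P_def by simp
    thus ?thesis unfolding B_def distrib_left using hA hP vm by linarith
  qed
  have S1B: "S1 - e2 \<le> B"
  proof -
    have "S1 - e2 \<le> 2*A + 2*P + 2*Q" using S1hi e2' unfolding A_def P_def Q_def by simp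
    thus ?thesis unfolding B_def distrib_left using hA hP vm vp e2 by linarith
  qed
  have Td: "\<bar>S2 - S1\<bar> \<le> 2*\<bar>vp-vm\<bar>*(2*(e*x) + e*(vm+vp))/e2"
  proof -
    have "\<bar>S2 - S1\<bar> \<le> \<bar>(e2\<^sup>2 + 4*e*(x+vp)\<^sup>2) - (e2\<^sup>2 + 4*e*(x+vm)\<^sup>2)\<bar> / (2*e2)"
      unfolding S2_def S1_def
      using e e2 S1lo S2lo' unfolding S1_def S2_def by (intro sqrt_diff_bound) auto
    also have "\<bar>(e2\<^sup>2 + 4*e*(x+vp)\<^sup>2) - (e2\<^sup>2 + 4*e*(x+vm)\<^sup>2)\<bar> = 4*e*\<bar>vp-vm\<bar>*(2*x+vm+vp)"
    proof -
      have "(e2\<^sup>2 + 4*e*(x+vp)\<^sup>2) - (e2\<^sup>2 + 4*e*(x+vm)\<^sup>2) = (4*e*(2*x+vm+vp))*(vp-vm)"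
        by (simp add: power2_eq_square algebra_simps)
      thus ?thesis using e x0 vm vp by (simp add: abs_mult)
    qed
    finally show ?thesis using e2 by (simp add: field_simps)
  qed
  have "\<bar>r2*(S2+e2) - r1*(S1-e2) - 2*e2\<bar> = \<bar>(r2-1)*(S2+e2) - (r1-1)*(S1-e2) + (S2-S1)\<bar>"
    by (simp add: algebra_simps)
  also have "\<dots> \<le> (1-r2)*(S2+e2) + (1-r1)*(S1-e2) + \<bar>S2-S1\<bar>"
  proof -
    have "\<bar>(r2-1)*(S2+e2)\<bar> = (1-r2)*(S2+e2)" using r2b S2lo' e2 by (intro ab) auto
    moreover have "\<bar>(r1-1)*(S1-e2)\<bar> = (1-r1)*(S1-e2)" using r1b S1lo by (intro ab) auto
    ultimately show ?thesis using tri[of "(r2-1)*(S2+e2)" "(r1-1)*(S1-e2)" "S2-S1"] by simp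
  qed
  also have "\<dots> \<le> (1-r2)*(B+e2) + (1-r1)*B + 2*\<bar>vp-vm\<bar>*(2*(e*x) + e*(vm+vp))/e2"
    using r1b r2b S2B S1B Td by (intro add_mono mult_left_mono) auto
  finally show "\<bar>r2*(S2+e2) - r1*(S1-e2) - 2*e2\<bar> \<le> (1-r2)*(B+e2) + (1-r1)*B + 2*\<bar>vp-vm\<bar>*(2*(e*x) + e*(vm+vp))/e2" .
qed

theorem lemma6p3:
  fixes e2 um vm up vp :: real
    and us vs :: "real \<Rightarrow> real"
  assumes "e2 > 0" and "vm > 0" and "vp > 0" and "um > up + 2 * e2"
    and "\<forall>\<^sub>F e1 in at_right 0. two_shock_state e1 e2 um vm up vp (us e1) (vs e1)"
  shows "(us \<longlongrightarrow> (um + up) / 2 + e2) (at_right 0) \<and>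
         ((\<lambda>e1. shock_speed1 e2 um vm (us e1) (vs e1)) \<longlongrightarrow> (um + up) / 2) (at_right 0) \<and>
         ((\<lambda>e1. shock_speed2 e2 up vp (us e1) (vs e1)) \<longlongrightarrow> (um + up) / 2) (at_right 0)"
proof -
  note A = assms(1-4)
  define F where "F = at_right (0::real)"
  define D where "D = um - up"
  define c where "c = (um - up - 2*e2)/2"
  have c0: "c \<noteq> 0" using A unfolding c_def by simp
  define B where "B = e2 + (um - up) + 4*(vm+vp)"
  define S1 where "S1 = (\<lambda>e. sqrt (e2\<^sup>2 + 4*e*(vs e+vm)\<^sup>2))"
  define S2 where "S2 = (\<lambda>e. sqrt (e2\<^sup>2 + 4*e*(vs e+vp)\<^sup>2))"
  define q1 where "q1 = (\<lambda>e. vm / vs e)"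
  define q2 where "q2 = (\<lambda>e. vp / vs e)"
  define R1 where "R1 = (\<lambda>e. (1 - q1 e)/(1 + q1 e))"
  define R2 where "R2 = (\<lambda>e. (1 - q2 e)/(1 + q2 e))"
  define T where "T = (\<lambda>e. R2 e*(S2 e + e2) - R1 e*(S1 e - e2) - 2*e2)"
  define G where "G = (\<lambda>e. (1-R2 e)*(B+e2) + (1-R1 e)*B + 2*\<bar>vp-vm\<bar>*(2*(e*vs e) + e*(vm+vp))/e2)"
  have ev: "eventually (\<lambda>e. 0<e \<and> e<1 \<and> two_shock_state e e2 um vm up vp (us e) (vs e)) F"
    using eventually_conj[OF eventually_at_right_real[of 0 1] assms(5)] unfolding F_def
    by (rule eventually_mono) auto
  have P: "eventually (\<lambda>e. us e = um - R1 e*(S1 e-e2) \<and> us e - up = R2 e*(S2 e+e2) \<and>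
      q1 e \<le> 4*vm*sqrt e/c \<and> q2 e \<le> 4*vp*sqrt e/c \<and> 0 \<le> q1 e \<and> 0 \<le> q2 e \<and>
      0 \<le> e*vs e \<and> e*vs e \<le> sqrt e*(D/2 + sqrt e*vp) \<and> \<bar>T e\<bar> \<le> G e \<and> vs e > vm \<and> vs e > vp) F"
    using ev
  proof (rule eventually_mono)
    fix e assume h: "0<e \<and> e<1 \<and> two_shock_state e e2 um vm up vp (us e) (vs e)"
    note p = pw[OF A h[THEN conjunct1] h[THEN conjunct2, THEN conjunct1] h[THEN conjunct2, THEN conjunct2]]
    have "vs e > vm" "vs e > vp" using h unfolding two_shock_state_def by auto
    thus "us e = um - R1 e*(S1 e-e2) \<and> us e - up = R2 e*(S2 e+e2) \<and>
      q1 e \<le> 4*vm*sqrt e/c \<and> q2 e \<le> 4*vp*sqrt e/c \<and> 0 \<le> q1 e \<and> 0 \<le> q2 e \<and>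
      0 \<le> e*vs e \<and> e*vs e \<le> sqrt e*(D/2 + sqrt e*vp) \<and> \<bar>T e\<bar> \<le> G e \<and> vs e > vm \<and> vs e > vp"
      using p unfolding S1_def S2_def q1_def q2_def R1_def R2_def c_def D_def T_def G_def B_def
      by auto
  qed
  have sq: "((\<lambda>e. sqrt e) \<longlongrightarrow> 0) F"
    unfolding F_def using tendsto_real_sqrt[OF tendsto_ident_at[of 0 "{0<..}"]] by simp
  have id: "((\<lambda>e. e) \<longlongrightarrow> 0) F" unfolding F_def by (rule tendsto_ident_at)
  have q1l: "(q1 \<longlongrightarrow> 0) F"
  proof (rule tendsto_sandwich[of "\<lambda>_. 0" q1 F "\<lambda>e. 4*vm*sqrt e/c"])
    show "eventually (\<lambda>e. 0 \<le> q1 e) F" "eventually (\<lambda>e. q1 e \<le> 4*vm*sqrt e/c) F"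
      using P by (auto elim: eventually_mono)
    have "((\<lambda>e. 4*vm*sqrt e/c) \<longlongrightarrow> 4*vm*0/c) F" by (intro tendsto_intros sq c0)
    thus "((\<lambda>e. 4*vm*sqrt e/c) \<longlongrightarrow> 0) F" by simp
  qed simp
  have q2l: "(q2 \<longlongrightarrow> 0) F"
  proof (rule tendsto_sandwich[of "\<lambda>_. 0" q2 F "\<lambda>e. 4*vp*sqrt e/c"])
    show "eventually (\<lambda>e. 0 \<le> q2 e) F" "eventually (\<lambda>e. q2 e \<le> 4*vp*sqrt e/c) F"
      using P by (auto elim: eventually_mono)
    have "((\<lambda>e. 4*vp*sqrt e/c) \<longlongrightarrow> 4*vp*0/c) F" by (intro tendsto_intros sq c0)
    thus "((\<lambda>e. 4*vp*sqrt e/c) \<longlongrightarrow> 0) F" by simp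
  qed simp
  have exl: "((\<lambda>e. e * vs e) \<longlongrightarrow> 0) F"
  proof (rule tendsto_sandwich[of "\<lambda>_. 0" _ F "\<lambda>e. sqrt e*(D/2 + sqrt e*vp)"])
    show "eventually (\<lambda>e. 0 \<le> e * vs e) F" "eventually (\<lambda>e. e * vs e \<le> sqrt e*(D/2 + sqrt e*vp)) F"
      using P by (auto elim: eventually_mono)
    have "((\<lambda>e. sqrt e*(D/2 + sqrt e*vp)) \<longlongrightarrow> 0*(D/2 + 0*vp)) F"
      by (intro tendsto_intros sq)
    thus "((\<lambda>e. sqrt e*(D/2 + sqrt e*vp)) \<longlongrightarrow> 0) F" by simp
  qed simp
  have R1l: "(R1 \<longlongrightarrow> 1) F"
  proof -
    have "(R1 \<longlongrightarrow> (1-0)/(1+0)) F" unfolding R1_def by (intro tendsto_intros q1l) simp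
    thus ?thesis by simp
  qed
  have R2l: "(R2 \<longlongrightarrow> 1) F"
  proof -
    have "(R2 \<longlongrightarrow> (1-0)/(1+0)) F" unfolding R2_def by (intro tendsto_intros q2l) simp
    thus ?thesis by simp
  qed
  have Gl: "(G \<longlongrightarrow> 0) F"
  proof -
    have "(G \<longlongrightarrow> (1-1)*(B+e2) + (1-1)*B + 2*\<bar>vp-vm\<bar>*(2*0 + 0*(vm+vp))/e2) F"
      unfolding G_def by (intro tendsto_intros R1l R2l exl id) (use A in simp)
    thus ?thesis by simp
  qed
  have Tl: "(T \<longlongrightarrow> 0) F"
  proof (rule tendsto_sandwich[of "\<lambda>e. - G e" T F G])
    show "eventually (\<lambda>e. - G e \<le> T e) F" "eventually (\<lambda>e. T e \<le> G e) F"
      using P by (auto elim: eventually_mono)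
    show "((\<lambda>e. - G e) \<longlongrightarrow> 0) F" using tendsto_minus[OF Gl] by simp
  qed (rule Gl)
  have t1: "eventually (\<lambda>e. (D - 2*e2 - T e)/2 = R1 e*(S1 e-e2)) F"
    using P by (rule eventually_mono) (auto simp: T_def D_def field_simps)
  have t2: "eventually (\<lambda>e. (D + 2*e2 + T e)/2 = R2 e*(S2 e+e2)) F"
    using P by (rule eventually_mono) (auto simp: T_def D_def field_simps)
  have t1l: "((\<lambda>e. R1 e*(S1 e-e2)) \<longlongrightarrow> (D - 2*e2)/2) F"
  proof -
    have "((\<lambda>e. (D - 2*e2 - T e)/2) \<longlongrightarrow> (D - 2*e2 - 0)/2) F" by (intro tendsto_intros Tl) simp
    thus ?thesis using Lim_transform_eventually[OF _ t1] by simp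
  qed
  have t2l: "((\<lambda>e. R2 e*(S2 e+e2)) \<longlongrightarrow> (D + 2*e2)/2) F"
  proof -
    have "((\<lambda>e. (D + 2*e2 + T e)/2) \<longlongrightarrow> (D + 2*e2 + 0)/2) F" by (intro tendsto_intros Tl) simp
    thus ?thesis using Lim_transform_eventually[OF _ t2] by simp
  qed
  have g1: "(us \<longlongrightarrow> (um + up) / 2 + e2) F"
  proof -
    have "((\<lambda>e. um - R1 e*(S1 e-e2)) \<longlongrightarrow> um - (D - 2*e2)/2) F" by (intro tendsto_intros t1l)
    moreover have "um - (D - 2*e2)/2 = (um + up) / 2 + e2" unfolding D_def by (simp add: field_simps)
    moreover have "eventually (\<lambda>e. um - R1 e*(S1 e-e2) = us e) F" using P by (rule eventually_mono) auto
    ultimately show ?thesis by (metis Lim_transform_eventually)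
  qed
  have g2: "((\<lambda>e1. shock_speed1 e2 um vm (us e1) (vs e1)) \<longlongrightarrow> (um + up) / 2) F"
  proof -
    have "((\<lambda>e. um - (1/(1 - q1 e)) * (R1 e*(S1 e-e2)) - e2) \<longlongrightarrow> um - (1/(1-0))*((D - 2*e2)/2) - e2) F"
      by (intro tendsto_intros t1l q1l) simp
    moreover have "um - (1/(1-0))*((D - 2*e2)/2) - e2 = (um + up) / 2" unfolding D_def by (simp add: field_simps)
    moreover have "eventually (\<lambda>e. um - (1/(1 - q1 e)) * (R1 e*(S1 e-e2)) - e2 = shock_speed1 e2 um vm (us e) (vs e)) F"
      using P
    proof (rule eventually_mono)
      fix e assume h: "us e = um - R1 e*(S1 e-e2) \<and> us e - up = R2 e*(S2 e+e2) \<and>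
      q1 e \<le> 4*vm*sqrt e/c \<and> q2 e \<le> 4*vp*sqrt e/c \<and> 0 \<le> q1 e \<and> 0 \<le> q2 e \<and>
      0 \<le> e*vs e \<and> e*vs e \<le> sqrt e*(D/2 + sqrt e*vp) \<and> \<bar>T e\<bar> \<le> G e \<and> vs e > vm \<and> vs e > vp"
      hence x: "vs e > vm" "vs e > 0" using A by auto
      have "1/(1 - q1 e) = vs e/(vs e - vm)" unfolding q1_def using x by (simp add: field_simps)
      moreover have "vs e * (us e - um) / (vs e - vm) = vs e/(vs e - vm) * (us e - um)" by simp
      moreover have "us e - um = - (R1 e*(S1 e-e2))" using h by simp
      ultimately show "um - (1/(1 - q1 e)) * (R1 e*(S1 e-e2)) - e2 = shock_speed1 e2 um vm (us e) (vs e)"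
        unfolding shock_speed1_def by simp
    qed
    ultimately show ?thesis by (metis Lim_transform_eventually)
  qed
  have g3: "((\<lambda>e1. shock_speed2 e2 up vp (us e1) (vs e1)) \<longlongrightarrow> (um + up) / 2) F"
  proof -
    have "((\<lambda>e. up + (1/(1 - q2 e)) * (R2 e*(S2 e+e2)) - e2) \<longlongrightarrow> up + (1/(1-0))*((D + 2*e2)/2) - e2) F"
      by (intro tendsto_intros t2l q2l) simp
    moreover have "up + (1/(1-0))*((D + 2*e2)/2) - e2 = (um + up) / 2" unfolding D_def by (simp add: field_simps)
    moreover have "eventually (\<lambda>e. up + (1/(1 - q2 e)) * (R2 e*(S2 e+e2)) - e2 = shock_speed2 e2 up vp (us e) (vs e)) F"
      using P
    proof (rule eventually_mono)
      fix e assume h: "us e = um - R1 e*(S1 e-e2) \<and> us e - up = R2 e*(S2 e+e2) \<and>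
      q1 e \<le> 4*vm*sqrt e/c \<and> q2 e \<le> 4*vp*sqrt e/c \<and> 0 \<le> q1 e \<and> 0 \<le> q2 e \<and>
      0 \<le> e*vs e \<and> e*vs e \<le> sqrt e*(D/2 + sqrt e*vp) \<and> \<bar>T e\<bar> \<le> G e \<and> vs e > vm \<and> vs e > vp"
      hence x: "vs e > vp" "vs e > 0" using A by auto
      have "1/(1 - q2 e) = vs e/(vs e - vp)" unfolding q2_def using x by (simp add: field_simps)
      moreover have "vs e * (up - us e) / (vp - vs e) = vs e/(vs e - vp) * (us e - up)"
        using x by (simp add: field_simps)
      ultimately show "up + (1/(1 - q2 e)) * (R2 e*(S2 e+e2)) - e2 = shock_speed2 e2 up vp (us e) (vs e)"
        unfolding shock_speed2_def using h by simp
    qed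
    ultimately show ?thesis by (metis Lim_transform_eventually)
  qed
  show ?thesis using g1 g2 g3 unfolding F_def by blast
qed

end
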